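(* Let $d\in\mathbb{N}$, $k\in\{1,\dots,d\}$, $\varepsilon>0$, and $\mathbf{e}_1,\mathbf{e}_2\in\mathbb{R}^d$. Define $$\psi_{sign}(\mathbf{e}_2):=\begin{cases}\max_{i\notin\mathrm{TopFeatures}(\mathbf{e}_1;k)}|e_{2i}| & (k<d),\\ 0 & (k=d),\end{cases}$$ and $$\ell_{\mathrm{Sgn}}(\mathbf{e}_2;\mathbf{e}_1,k):=\frac1k\sum_{i\in\mathrm{TopFeatures}(\mathbf{e}_1;k)}\max\big(0,\ \psi_{sign}(\mathbf{e}_2)-\mathrm{sign}(e_{1i})\,e_{2i}+\varepsilon\big).$$ Then $$1-\mathrm{SignAgree}(\mathbf{e}_1,\mathbf{e}_2;k)\le\varepsilon^{-1}\,\ell_{\mathrm{Sgn}}(\mathbf{e}_2;\mathbf{e}_1,k).$$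
   Context: $\mathrm{sign}(x):=1$ if $x\ge0$ and $-1$ otherwise. For $\mathbf{x}\in\mathbb{R}^d$, $\mathrm{rank}(\mathbf{x},i)$ denotes the position of index $i$ when indices are ordered by descending $|x_i|$, i.e. $|\{j\in[d]:|x_j|\ge|x_i|\}|$, with ties broken so that ranks form a permutation of $[d]$ (paper's convention: if $|x_i|=|x_j|$ with $i>j$ then $\mathrm{rank}(\mathbf{x},j)=\mathrm{rank}(\mathbf{x},i)+1$). $\mathrm{TopFeatures}(\mathbf{x};k):=\{i\in[d]:\mathrm{rank}(\mathbf{x},i)\le k\}$. The top-$k$ sign agreement is $\mathrm{SignAgree}(\mathbf{e}_1,\mathbf{e}_2;k):=\frac1k\big|\{i\in[d]: i\in\mathrm{TopFeatures}(\mathbf{e}_1;k)\wedge i\in\mathrm{TopFeatures}(\mathbf{e}_2;k)\wedge\mathrm{sign}(e_{1i})=\mathrm{sign}(e_{2i})\}\big|$. *)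

theory Defs
  imports Complex_Main
begin

text \<open>Vectors in R^d are functions nat => real, indexed by [d] = {1..d}.\<close>

definition sign :: "real \<Rightarrow> real" where
  "sign x = (if x \<ge> 0 then 1 else -1)"

text \<open>Rank with the paper's tie-breaking: among equal magnitudes, the larger index
  gets the smaller rank. rank(x,i) = #{j. |x_j| > |x_i|} + #{j >= i. |x_j| = |x_i|}.\<close>
definition rank :: "nat \<Rightarrow> (nat \<Rightarrow> real) \<Rightarrow> nat \<Rightarrow> nat" where
  "rank d x i = card {j \<in> {1..d}. \<bar>x j\<bar> > \<bar>x i\<bar> \<or> (\<bar>x j\<bar> = \<bar>x i\<bar> \<and> j \<ge> i)}"

definition TopFeatures :: "nat \<Rightarrow> (nat \<Rightarrow> real) \<Rightarrow> nat \<Rightarrow> nat set" where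
  "TopFeatures d x k = {i \<in> {1..d}. rank d x i \<le> k}"

definition SignAgree :: "nat \<Rightarrow> (nat \<Rightarrow> real) \<Rightarrow> (nat \<Rightarrow> real) \<Rightarrow> nat \<Rightarrow> real" where
  "SignAgree d e1 e2 k = real (card {i \<in> {1..d}. i \<in> TopFeatures d e1 k \<and> i \<in> TopFeatures d e2 k
        \<and> sign (e1 i) = sign (e2 i)}) / real k"

definition psi_sign :: "nat \<Rightarrow> (nat \<Rightarrow> real) \<Rightarrow> nat \<Rightarrow> (nat \<Rightarrow> real) \<Rightarrow> real" where
  "psi_sign d e1 k e2 = (if k < d then Max ((\<lambda>i. \<bar>e2 i\<bar>) ` ({1..d} - TopFeatures d e1 k)) else 0)"

definition loss_Sgn :: "nat \<Rightarrow> real \<Rightarrow> (nat \<Rightarrow> real) \<Rightarrow> (nat \<Rightarrow> real) \<Rightarrow> nat \<Rightarrow> real" where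
  "loss_Sgn d \<epsilon> e2 e1 k = (1 / real k) * (\<Sum>i \<in> TopFeatures d e1 k.
        max 0 (psi_sign d e1 k e2 - sign (e1 i) * e2 i + \<epsilon>))"

end

theory Submission
  imports Defs
begin

definition RS :: "nat \<Rightarrow> (nat \<Rightarrow> real) \<Rightarrow> nat \<Rightarrow> nat set" where
  "RS d x i = {j \<in> {1..d}. \<bar>x j\<bar> > \<bar>x i\<bar> \<or> (\<bar>x j\<bar> = \<bar>x i\<bar> \<and> j \<ge> i)}"

lemma rank_RS: "rank d x i = card (RS d x i)"
  unfolding rank_def RS_def by simp

lemma RS_sub: "j \<in> RS d x i \<Longrightarrow> RS d x j \<subseteq> RS d x i"
  unfolding RS_def by auto

lemma rank_range: "i \<in> {1..d} \<Longrightarrow> rank d x i \<in> {1..d}"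
proof -
  assume i: "i \<in> {1..d}"
  have "i \<in> RS d x i" using i unfolding RS_def by auto
  hence ne: "RS d x i \<noteq> {}" by blast
  have sub: "RS d x i \<subseteq> {1..d}" unfolding RS_def by blast
  hence fin: "finite (RS d x i)" using finite_subset by blast
  have "card (RS d x i) > 0" using ne fin by (simp add: card_gt_0_iff)
  hence "card (RS d x i) \<ge> 1" by simp
  moreover have "card (RS d x i) \<le> card {1..d}" using card_mono[OF _ sub] by simp
  hence "card (RS d x i) \<le> d" by simp
  ultimately show ?thesis by (simp add: rank_RS)
qed

lemma rank_inj: "inj_on (rank d x) {1..d}"
proof (rule inj_onI)
  fix i j assume i: "i \<in> {1..d}" and j: "j \<in> {1..d}" and eq: "rank d x i = rank d x j"
  show "i = j"
  proof (rule ccontr)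
    assume ne: "i \<noteq> j"
    have fin: "finite (RS d x a)" for a unfolding RS_def by auto
    have "(j \<in> RS d x i \<and> i \<notin> RS d x j) \<or> (i \<in> RS d x j \<and> j \<notin> RS d x i)"
      using i j ne unfolding RS_def by auto
    moreover have "i \<in> RS d x i" "j \<in> RS d x j" using i j unfolding RS_def by auto
    ultimately have "RS d x j \<subset> RS d x i \<or> RS d x i \<subset> RS d x j"
      using RS_sub by blast
    hence "card (RS d x j) < card (RS d x i) \<or> card (RS d x i) < card (RS d x j)"
      using psubset_card_mono fin by blast
    thus False using eq by (simp add: rank_RS)
  qed
qed

lemma rank_image: "rank d x ` {1..d} = {1..d}"
proof -
  have "rank d x ` {1..d} \<subseteq> {1..d}" using rank_range by blast
  moreover have "card (rank d x ` {1..d}) = card {1..d::nat}"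
    using card_image[OF rank_inj] by simp
  ultimately show ?thesis by (simp add: card_subset_eq)
qed

lemma card_Top: assumes "k \<le> d" shows "card (TopFeatures d x k) = k"
proof -
  have "rank d x ` TopFeatures d x k = {1..k}"
  proof
    show "rank d x ` TopFeatures d x k \<subseteq> {1..k}"
      unfolding TopFeatures_def using rank_range by fastforce
    show "{1..k} \<subseteq> rank d x ` TopFeatures d x k"
    proof
      fix r assume r: "r \<in> {1..k}"
      hence "r \<in> rank d x ` {1..d}" using rank_image assms by auto
      then obtain i where "i \<in> {1..d}" "rank d x i = r" by auto
      thus "r \<in> rank d x ` TopFeatures d x k" unfolding TopFeatures_def using r by auto
    qed
  qed
  moreover have "inj_on (rank d x) (TopFeatures d x k)"
    using rank_inj by (rule inj_on_subset) (auto simp: TopFeatures_def)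
  ultimately show ?thesis using card_image[of "rank d x" "TopFeatures d x k"] by simp
qed

theorem lemma3:
  fixes d k :: nat and \<epsilon> :: real and e1 e2 :: "nat \<Rightarrow> real"
  assumes "1 \<le> k" and "k \<le> d" and "\<epsilon> > 0"
  shows "1 - SignAgree d e1 e2 k \<le> (1 / \<epsilon>) * loss_Sgn d \<epsilon> e2 e1 k"
proof -
  define T1 where "T1 = TopFeatures d e1 k"
  define G where "G = {i \<in> {1..d}. i \<in> TopFeatures d e1 k \<and> i \<in> TopFeatures d e2 k
        \<and> sign (e1 i) = sign (e2 i)}"
  define \<psi> where "\<psi> = psi_sign d e1 k e2"
  define f where "f i = max 0 (\<psi> - sign (e1 i) * e2 i + \<epsilon>)" for i
  have cT1: "card T1 = k" using card_Top[OF assms(2)] T1_def by simp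
  have T1sub: "T1 \<subseteq> {1..d}" unfolding T1_def TopFeatures_def by auto
  have finT1: "finite T1" using T1sub finite_subset by blast
  have GT1: "G \<subseteq> T1" unfolding G_def T1_def by auto
  have fnn: "f i \<ge> 0" for i unfolding f_def by simp
  have bad: "f i \<ge> \<epsilon>" if iT: "i \<in> T1" "i \<notin> G" for i
  proof -
    have id: "i \<in> {1..d}" using iT T1sub by auto
    have key: "sign (e1 i) * e2 i \<le> \<psi>"
    proof (cases "sign (e1 i) = sign (e2 i)")
      case False
      hence "sign (e1 i) * e2 i \<le> 0" unfolding sign_def by (auto split: if_splits)
      moreover have "\<psi> \<ge> 0"
      proof (cases "k < d")
        case True
        have "card ({1..d} - T1) = d - k" using cT1 T1sub finT1
          by (simp add: card_Diff_subset)
        hence "{1..d} - T1 \<noteq> {}" using True by (metis card.empty diff_is_0_eq leD)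
        then obtain j where "j \<in> {1..d} - T1" by blast
        hence "\<bar>e2 j\<bar> \<le> Max ((\<lambda>i. \<bar>e2 i\<bar>) ` ({1..d} - T1))" by (intro Max_ge) auto
        thus ?thesis unfolding \<psi>_def psi_sign_def T1_def using True by simp
      next
        case False thus ?thesis unfolding \<psi>_def psi_sign_def by simp
      qed
      ultimately show ?thesis by linarith
    next
      case True
      hence nT2: "i \<notin> TopFeatures d e2 k" using iT id unfolding G_def T1_def by auto
      hence rk: "card (RS d e2 i) > k" using id unfolding TopFeatures_def rank_RS by auto
      have "\<not> RS d e2 i \<subseteq> T1"
      proof
        assume "RS d e2 i \<subseteq> T1"
        hence "card (RS d e2 i) \<le> card T1" using card_mono finT1 by blast
        thus False using rk cT1 by simp
      qed
      then obtain j where j: "j \<in> RS d e2 i" "j \<notin> T1" by blast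
      hence jd: "j \<in> {1..d}" and ge: "\<bar>e2 j\<bar> \<ge> \<bar>e2 i\<bar>" unfolding RS_def by auto
      have "k < d"
      proof (rule ccontr)
        assume "\<not> k < d"
        hence "k = d" using assms by simp
        have "RS d e2 i \<subseteq> {1..d}" unfolding RS_def by auto
        hence "card (RS d e2 i) \<le> card {1..d}" by (intro card_mono) auto
        hence "card (RS d e2 i) \<le> d" by simp
        thus False using rk \<open>k = d\<close> by simp
      qed
      have "\<bar>e2 j\<bar> \<le> Max ((\<lambda>i. \<bar>e2 i\<bar>) ` ({1..d} - T1))" using j jd by (intro Max_ge) auto
      hence "\<bar>e2 i\<bar> \<le> \<psi>" unfolding \<psi>_def psi_sign_def T1_def using \<open>k < d\<close> ge by simp
      moreover have "sign (e1 i) * e2 i \<le> \<bar>e2 i\<bar>" unfolding sign_def by auto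
      ultimately show ?thesis by linarith
    qed
    thus ?thesis unfolding f_def by simp
  qed
  have finG: "finite G" using GT1 finT1 finite_subset by blast
  have "\<epsilon> * real (card (T1 - G)) = (\<Sum>i \<in> T1 - G. \<epsilon>)" by simp
  also have "\<dots> \<le> (\<Sum>i \<in> T1 - G. f i)" using bad by (intro sum_mono) auto
  also have "\<dots> \<le> (\<Sum>i \<in> T1. f i)" using fnn finT1 by (intro sum_mono2) auto
  finally have S: "\<epsilon> * real (card T1 - card G) \<le> (\<Sum>i \<in> T1. f i)"
    using card_Diff_subset[OF finG GT1] by simp
  have cG: "card G \<le> k" using card_mono[OF finT1 GT1] cT1 by simp
  have L: "loss_Sgn d \<epsilon> e2 e1 k = (1 / real k) * (\<Sum>i \<in> T1. f i)"
    unfolding loss_Sgn_def T1_def f_def \<psi>_def by simp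
  have SA: "SignAgree d e1 e2 k = real (card G) / real k" unfolding SignAgree_def G_def by simp
  have kpos: "real k > 0" using assms by simp
  have S2: "real k - real (card G) \<le> (\<Sum>i \<in> T1. f i) / \<epsilon>"
    using S cT1 cG assms(3) by (simp add: pos_le_divide_eq of_nat_diff mult.commute)
  have "1 - real (card G) / real k = (real k - real (card G)) / real k"
    using kpos by (simp add: diff_divide_distrib)
  also have "\<dots> \<le> ((\<Sum>i \<in> T1. f i) / \<epsilon>) / real k"
    using S2 kpos by (rule divide_right_mono[OF _ less_imp_le])
  also have "\<dots> = (1 / \<epsilon>) * ((1 / real k) * (\<Sum>i \<in> T1. f i))" by simp
  finally show ?thesis using L SA by simp
qed

end
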